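(* Let $A$ be a finite-dimensional Hopf algebra over $k$ and $\tau$ a Hopf automorphism of $A$ whose order divides $m$. (i) If $\Lambda_r$ is a right integral of $A$ and $\lambda_r$ a right integral of $A^*$ with $\lambda_r(\Lambda_r)=1$, then $\nu_{m,\tau}(A)=\lambda_r\big(\Lambda_r^{[m,\tau]}\big)$. (ii) If $\Lambda_l$ is a left integral of $A$ and $\lambda_l$ a left integral of $A^*$ with $\lambda_l(\Lambda_l)=1$, then $\nu_{m,\tau}(A)=\lambda_l\big(\tau^{-1}\cdot\Lambda_l^{[m,\tau^{-1}]}\big)$.
   Context: For $a\in A$, $P_{m-1,\tau}(a)=\sum(\tau^{m-1}\cdot a_1)(\tau^{m-2}\cdot a_2)\cdots(\tau\cdot a_{m-1})$ (Sweedler notation), and the $m$th twisted Frobenius–Schur indicator is $\nu_{m,\tau}(A)=\mathrm{Tr}(S\circ P_{m-1,\tau})$, the trace of the linear map $S\circ P_{m-1,\tau}:A\to A$. For a Hopf automorphism $\sigma$ and $h\in A$, $h^{[m,\sigma]}=\sum h_1(\sigma\cdot h_2)\cdots(\sigma^{m-1}\cdot h_m)$. *)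

theory Defs
  imports Main
begin

text \<open>A finite-dimensional Hopf algebra over a field 'k is modelled by structure
constants with respect to a basis (e_i) indexed by a finite type 'i.  Elements of A
are coordinate vectors 'i => 'k; elements of A (x) A are 'i => 'i => 'k;
functionals on A (elements of the dual A^*) are coefficient vectors 'i => 'k.\<close>

record ('i, 'k) hopf =
  hmult :: "'i \<Rightarrow> 'i \<Rightarrow> 'i \<Rightarrow> 'k"      (* e_i e_j = sum_l hmult i j l e_l *)
  hunit :: "'i \<Rightarrow> 'k"
  hcomult :: "'i \<Rightarrow> 'i \<Rightarrow> 'i \<Rightarrow> 'k"    (* Delta e_l = sum_{i,j} hcomult l i j e_i (x) e_j *)
  hcounit :: "'i \<Rightarrow> 'k"
  hantipode :: "'i \<Rightarrow> 'i \<Rightarrow> 'k"        (* S e_i = sum_j hantipode i j e_j *)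

definition bvec :: "'i \<Rightarrow> 'i \<Rightarrow> 'k::field" where
  "bvec i = (\<lambda>j. if j = i then 1 else 0)"

definition mul :: "('i, 'k::field) hopf \<Rightarrow> ('i \<Rightarrow> 'k) \<Rightarrow> ('i \<Rightarrow> 'k) \<Rightarrow> ('i \<Rightarrow> 'k)" where
  "mul H x y = (\<lambda>l. \<Sum>i\<in>UNIV. \<Sum>j\<in>UNIV. x i * y j * hmult H i j l)"

definition one :: "('i, 'k::field) hopf \<Rightarrow> ('i \<Rightarrow> 'k)" where
  "one H = hunit H"

definition cou :: "('i, 'k::field) hopf \<Rightarrow> ('i \<Rightarrow> 'k) \<Rightarrow> 'k" where
  "cou H x = (\<Sum>i\<in>UNIV. x i * hcounit H i)"

definition comul :: "('i, 'k::field) hopf \<Rightarrow> ('i \<Rightarrow> 'k) \<Rightarrow> ('i \<Rightarrow> 'i \<Rightarrow> 'k)" where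
  "comul H x = (\<lambda>i j. \<Sum>l\<in>UNIV. x l * hcomult H l i j)"

definition antip :: "('i, 'k::field) hopf \<Rightarrow> ('i \<Rightarrow> 'k) \<Rightarrow> ('i \<Rightarrow> 'k)" where
  "antip H x = (\<lambda>j. \<Sum>i\<in>UNIV. x i * hantipode H i j)"

definition smul :: "'k::field \<Rightarrow> ('i \<Rightarrow> 'k) \<Rightarrow> ('i \<Rightarrow> 'k)" where
  "smul c x = (\<lambda>j. c * x j)"

definition tmap :: "(('i \<Rightarrow> 'k) \<Rightarrow> ('i \<Rightarrow> 'k)) \<Rightarrow> (('i \<Rightarrow> 'k) \<Rightarrow> ('i \<Rightarrow> 'k))
                    \<Rightarrow> ('i \<Rightarrow> 'i \<Rightarrow> 'k) \<Rightarrow> ('i \<Rightarrow> 'i \<Rightarrow> 'k::field)" where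
  "tmap f g T = (\<lambda>p q. \<Sum>i\<in>UNIV. \<Sum>j\<in>UNIV. T i j * f (bvec i) p * g (bvec j) q)"

definition tmul :: "('i, 'k::field) hopf \<Rightarrow> ('i \<Rightarrow> 'i \<Rightarrow> 'k) \<Rightarrow> ('i \<Rightarrow> 'k)" where
  "tmul H T = (\<lambda>l. \<Sum>i\<in>UNIV. \<Sum>j\<in>UNIV. T i j * hmult H i j l)"

definition tprod :: "('i, 'k::field) hopf \<Rightarrow> ('i \<Rightarrow> 'i \<Rightarrow> 'k) \<Rightarrow> ('i \<Rightarrow> 'i \<Rightarrow> 'k) \<Rightarrow> ('i \<Rightarrow> 'i \<Rightarrow> 'k)" where
  "tprod H T U = (\<lambda>p q. \<Sum>i\<in>UNIV. \<Sum>j\<in>UNIV. \<Sum>i'\<in>UNIV. \<Sum>j'\<in>UNIV.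
       T i j * U i' j' * hmult H i i' p * hmult H j j' q)"

definition hopf_algebra :: "('i::finite, 'k::field) hopf \<Rightarrow> bool" where
  "hopf_algebra H \<longleftrightarrow>
     (\<forall>x y z. mul H (mul H x y) z = mul H x (mul H y z)) \<and>
     (\<forall>x. mul H (one H) x = x \<and> mul H x (one H) = x) \<and>
     (\<forall>l i j k. (\<Sum>p\<in>UNIV. hcomult H l p k * hcomult H p i j)
               = (\<Sum>q\<in>UNIV. hcomult H l i q * hcomult H q j k)) \<and>
     (\<forall>l j. (\<Sum>i\<in>UNIV. hcounit H i * hcomult H l i j) = (if l = j then 1 else 0)) \<and>
     (\<forall>l i. (\<Sum>j\<in>UNIV. hcomult H l i j * hcounit H j) = (if l = i then 1 else 0)) \<and>
     (\<forall>x y. comul H (mul H x y) = tprod H (comul H x) (comul H y)) \<and>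
     comul H (one H) = (\<lambda>i j. one H i * one H j) \<and>
     (\<forall>x y. cou H (mul H x y) = cou H x * cou H y) \<and>
     cou H (one H) = 1 \<and>
     (\<forall>x. tmul H (tmap (antip H) id (comul H x)) = smul (cou H x) (one H)) \<and>
     (\<forall>x. tmul H (tmap id (antip H) (comul H x)) = smul (cou H x) (one H))"

definition hopf_automorphism :: "('i::finite, 'k::field) hopf \<Rightarrow> (('i \<Rightarrow> 'k) \<Rightarrow> ('i \<Rightarrow> 'k)) \<Rightarrow> bool" where
  "hopf_automorphism H t \<longleftrightarrow>
     (\<forall>a x y. t (\<lambda>j. a * x j + y j) = (\<lambda>j. a * t x j + t y j)) \<and>
     bij t \<and>
     (\<forall>x y. t (mul H x y) = mul H (t x) (t y)) \<and>
     t (one H) = one H \<and>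
     (\<forall>x. comul H (t x) = tmap t t (comul H x)) \<and>
     (\<forall>x. cou H (t x) = cou H x)"

text \<open>Sweedler product: sw H [f_1,...,f_n] a = sum f_1(a_1) f_2(a_2) ... f_n(a_n);
  for the empty list it is eps(a) 1.\<close>
fun sw :: "('i, 'k::field) hopf \<Rightarrow> (('i \<Rightarrow> 'k) \<Rightarrow> ('i \<Rightarrow> 'k)) list \<Rightarrow> ('i \<Rightarrow> 'k) \<Rightarrow> ('i \<Rightarrow> 'k)" where
  "sw H [] x = smul (cou H x) (one H)"
| "sw H (f # fs) x = (\<lambda>n. \<Sum>i\<in>UNIV. \<Sum>j\<in>UNIV.
      comul H x i j * mul H (f (bvec i)) (sw H fs (bvec j)) n)"

text \<open>P_{m-1,tau}(a) = sum (tau^{m-1} a_1)(tau^{m-2} a_2) ... (tau a_{m-1})\<close>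
definition Pmap :: "('i, 'k::field) hopf \<Rightarrow> nat \<Rightarrow> (('i \<Rightarrow> 'k) \<Rightarrow> ('i \<Rightarrow> 'k)) \<Rightarrow> ('i \<Rightarrow> 'k) \<Rightarrow> ('i \<Rightarrow> 'k)" where
  "Pmap H m t = sw H (map (\<lambda>k. t ^^ (m - 1 - k)) [0..<m - 1])"

text \<open>twisted Frobenius-Schur indicator nu_{m,tau}(A) = Tr(S o P_{m-1,tau})\<close>
definition fs_ind :: "('i, 'k::field) hopf \<Rightarrow> nat \<Rightarrow> (('i \<Rightarrow> 'k) \<Rightarrow> ('i \<Rightarrow> 'k)) \<Rightarrow> 'k" where
  "fs_ind H m t = (\<Sum>i\<in>UNIV. antip H (Pmap H m t (bvec i)) i)"

text \<open>h^{[m,sigma]} = sum h_1 (sigma h_2) ... (sigma^{m-1} h_m)\<close>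
definition twpow :: "('i, 'k::field) hopf \<Rightarrow> nat \<Rightarrow> (('i \<Rightarrow> 'k) \<Rightarrow> ('i \<Rightarrow> 'k)) \<Rightarrow> ('i \<Rightarrow> 'k) \<Rightarrow> ('i \<Rightarrow> 'k)" where
  "twpow H m s h = sw H (map (\<lambda>k. s ^^ k) [0..<m]) h"

definition left_integral :: "('i, 'k::field) hopf \<Rightarrow> ('i \<Rightarrow> 'k) \<Rightarrow> bool" where
  "left_integral H L \<longleftrightarrow> (\<forall>x. mul H x L = smul (cou H x) L)"

definition right_integral :: "('i, 'k::field) hopf \<Rightarrow> ('i \<Rightarrow> 'k) \<Rightarrow> bool" where
  "right_integral H L \<longleftrightarrow> (\<forall>x. mul H L x = smul (cou H x) L)"

text \<open>Dual Hopf algebra A^*: functional f given by values f(e_i); evaluation, convolution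
  product (f g)(a) = sum f(a_1) g(a_2), counit of A^* is f |-> f(1).\<close>
definition ev :: "('i \<Rightarrow> 'k::field) \<Rightarrow> ('i \<Rightarrow> 'k) \<Rightarrow> 'k" where
  "ev f x = (\<Sum>i\<in>UNIV. f i * x i)"

definition conv :: "('i, 'k::field) hopf \<Rightarrow> ('i \<Rightarrow> 'k) \<Rightarrow> ('i \<Rightarrow> 'k) \<Rightarrow> ('i \<Rightarrow> 'k)" where
  "conv H f g = (\<lambda>l. \<Sum>i\<in>UNIV. \<Sum>j\<in>UNIV. hcomult H l i j * f i * g j)"

definition dual_left_integral :: "('i, 'k::field) hopf \<Rightarrow> ('i \<Rightarrow> 'k) \<Rightarrow> bool" where
  "dual_left_integral H lam \<longleftrightarrow> (\<forall>g. conv H g lam = smul (ev g (one H)) lam)"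

definition dual_right_integral :: "('i, 'k::field) hopf \<Rightarrow> ('i \<Rightarrow> 'k) \<Rightarrow> bool" where
  "dual_right_integral H lam \<longleftrightarrow> (\<forall>g. conv H lam g = smul (ev g (one H)) lam)"

end

theory Submission imports Defs begin

definition lin :: "(('i::finite \<Rightarrow> 'k::field) \<Rightarrow> 'k) \<Rightarrow> bool" where
  "lin f \<longleftrightarrow> (\<forall>x. f x = (\<Sum>i\<in>UNIV. x i * f (bvec i)))"

definition linv :: "(('i::finite \<Rightarrow> 'k::field) \<Rightarrow> ('j \<Rightarrow> 'k)) \<Rightarrow> bool" where
  "linv g \<longleftrightarrow> (\<forall>n. lin (\<lambda>x. g x n))"

definition bil :: "(('i::finite \<Rightarrow> 'k::field) \<Rightarrow> ('i \<Rightarrow> 'k) \<Rightarrow> 'k) \<Rightarrow> bool" where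
  "bil F \<longleftrightarrow> (\<forall>b. lin (\<lambda>a. F a b)) \<and> (\<forall>a. lin (F a))"

definition swe :: "('i::finite, 'k::field) hopf \<Rightarrow> ('i \<Rightarrow> 'k) \<Rightarrow> (('i \<Rightarrow> 'k) \<Rightarrow> ('i \<Rightarrow> 'k) \<Rightarrow> 'k) \<Rightarrow> 'k" where
  "swe H x F = (\<Sum>i\<in>UNIV. \<Sum>j\<in>UNIV. comul H x i j * F (bvec i) (bvec j))"

lemma sum_bvec_r[simp]: "(\<Sum>j\<in>UNIV. f j * bvec i j) = (f (i::'i::finite) :: 'k::field)"
  by (simp add: bvec_def if_distrib cong: if_cong)
lemma sum_bvec_l[simp]: "(\<Sum>j\<in>UNIV. bvec i j * f j) = (f (i::'i::finite) :: 'k::field)"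
  using sum_bvec_r[of f i] by (simp add: mult.commute)
lemma sum_bvec_r2[simp]: "(\<Sum>j\<in>UNIV. f j * bvec j i) = (f (i::'i::finite) :: 'k::field)"
  by (simp add: bvec_def if_distrib cong: if_cong)
lemma sum_bvec_l2[simp]: "(\<Sum>j\<in>UNIV. bvec j i * f j) = (f (i::'i::finite) :: 'k::field)"
  using sum_bvec_r2[of f i] by (simp add: mult.commute)

lemma sum_if_l[simp]: "(\<Sum>j\<in>UNIV. (if l = j then 1 else 0) * f j) = (f (l::'i::finite) :: 'k::field)"
proof -
  have "(\<Sum>j\<in>UNIV. (if l = j then 1 else 0) * f j) = (\<Sum>j\<in>UNIV. if l = j then f j else 0)"
    by (rule sum.cong) auto
  thus ?thesis by simp
qed

lemma lin_iff: "lin f \<longleftrightarrow> (\<exists>c. \<forall>x. f x = (\<Sum>i\<in>UNIV. x i * c i))"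
proof
  assume "lin f" thus "\<exists>c. \<forall>x. f x = (\<Sum>i\<in>UNIV. x i * c i)" unfolding lin_def by (intro exI[of _ "\<lambda>i. f (bvec i)"])
next
  assume "\<exists>c. \<forall>x. f x = (\<Sum>i\<in>UNIV. x i * c i)"
  then obtain c where c: "\<And>x. f x = (\<Sum>i\<in>UNIV. x i * c i)" by blast
  have "f (bvec i) = c i" for i by (simp add: c)
  thus "lin f" unfolding lin_def using c by simp
qed

lemma linI: "(\<And>x. f x = (\<Sum>i\<in>UNIV. x i * c i)) \<Longrightarrow> lin f"
  using lin_iff by blast

lemma lin_sum:
  assumes "lin f" shows "f (\<lambda>n. \<Sum>k\<in>K. w k n) = (\<Sum>k\<in>K. f (w k))"
proof -
  have e: "\<And>x. f x = (\<Sum>i\<in>UNIV. x i * f (bvec i))" using assms unfolding lin_def by blast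
  have "f (\<lambda>n. \<Sum>k\<in>K. w k n) = (\<Sum>i\<in>UNIV. (\<Sum>k\<in>K. w k i) * f (bvec i))"
    by (rule e)
  also have "\<dots> = (\<Sum>i\<in>UNIV. \<Sum>k\<in>K. w k i * f (bvec i))" by (simp add: sum_distrib_right)
  also have "\<dots> = (\<Sum>k\<in>K. \<Sum>i\<in>UNIV. w k i * f (bvec i))" by (rule sum.swap)
  also have "\<dots> = (\<Sum>k\<in>K. f (w k))" by (rule sum.cong[OF refl], rule e[symmetric])
  finally show ?thesis .
qed

lemma lin_scale:
  assumes "lin f" shows "f (\<lambda>n. c * w n) = c * f w"
proof -
  have e: "\<And>x. f x = (\<Sum>i\<in>UNIV. x i * f (bvec i))" using assms unfolding lin_def by blast
  have "f (\<lambda>n. c * w n) = (\<Sum>i\<in>UNIV. (c * w i) * f (bvec i))"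
    by (rule e)
  also have "\<dots> = c * (\<Sum>i\<in>UNIV. w i * f (bvec i))" by (simp add: sum_distrib_left mult.assoc)
  also have "\<dots> = c * f w" by (subst e[of w]) (rule refl)
  finally show ?thesis .
qed

lemma lin_add:
  assumes "lin f" shows "f (\<lambda>n. v n + w n) = f v + f w"
proof -
  have e: "\<And>x. f x = (\<Sum>i\<in>UNIV. x i * f (bvec i))" using assms unfolding lin_def by blast
  have "f (\<lambda>n. v n + w n) = (\<Sum>i\<in>UNIV. (v i + w i) * f (bvec i))"
    by (rule e)
  also have "\<dots> = (\<Sum>i\<in>UNIV. v i * f (bvec i)) + (\<Sum>i\<in>UNIV. w i * f (bvec i))"
    by (simp add: sum.distrib distrib_right)
  also have "\<dots> = f v + f w" by (subst (1 2) e) (rule refl)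
  finally show ?thesis .
qed

lemma lin_eqI:
  assumes "lin f" "lin g" "\<And>i. f (bvec i) = g (bvec i)" shows "f x = g x"
proof -
  have "f x = (\<Sum>i\<in>UNIV. x i * f (bvec i))" using assms(1) unfolding lin_def by blast
  also have "\<dots> = (\<Sum>i\<in>UNIV. x i * g (bvec i))" using assms(3) by simp
  also have "\<dots> = g x" using assms(2) unfolding lin_def by (metis (no_types))
  finally show ?thesis .
qed

lemma lin_coord[simp]: "lin (\<lambda>x. x n)"
  by (rule linI[where c="bvec n"]) simp

lemma lin_cmult: "lin f \<Longrightarrow> lin (\<lambda>x. c * f x)"
proof -
  assume "lin f" then obtain d where d: "\<And>x. f x = (\<Sum>i\<in>UNIV. x i * d i)" using lin_iff by metis
  show ?thesis by (rule linI[where c="\<lambda>i. c * d i"]) (simp only: d sum_distrib_left mult.left_commute)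
qed

lemma lin_multc: "lin f \<Longrightarrow> lin (\<lambda>x. f x * c)"
proof -
  assume "lin f" then obtain d where d: "\<And>x. f x = (\<Sum>i\<in>UNIV. x i * d i)" using lin_iff by metis
  show ?thesis by (rule linI[where c="\<lambda>i. d i * c"]) (simp only: d sum_distrib_right mult.assoc)
qed

lemma lin_plus: "lin f \<Longrightarrow> lin g \<Longrightarrow> lin (\<lambda>x. f x + g x)"
proof -
  assume "lin f" then obtain d where d: "\<And>x. f x = (\<Sum>i\<in>UNIV. x i * d i)" using lin_iff by metis
  assume "lin g" then obtain e where e: "\<And>x. g x = (\<Sum>i\<in>UNIV. x i * e i)" using lin_iff by metis
  show ?thesis by (rule linI[where c="\<lambda>i. d i + e i"]) (simp only: d e sum.distrib[symmetric] distrib_left)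
qed

lemma lin_sumf: "(\<And>k. k \<in> K \<Longrightarrow> lin (F k)) \<Longrightarrow> lin (\<lambda>x. \<Sum>k\<in>K. F k x)"
proof -
  assume a: "\<And>k. k \<in> K \<Longrightarrow> lin (F k)"
  have e: "\<And>k x. k \<in> K \<Longrightarrow> F k x = (\<Sum>i\<in>UNIV. x i * F k (bvec i))"
    using a unfolding lin_def by blast
  show ?thesis
  proof (rule linI)
    fix x
    have "(\<Sum>k\<in>K. F k x) = (\<Sum>k\<in>K. \<Sum>i\<in>UNIV. x i * F k (bvec i))"
      by (rule sum.cong[OF refl], rule e)
    also have "\<dots> = (\<Sum>i\<in>UNIV. x i * (\<Sum>k\<in>K. F k (bvec i)))"
      by (simp only: sum_distrib_left) (rule sum.swap)
    finally show "(\<Sum>k\<in>K. F k x) = (\<Sum>i\<in>UNIV. x i * (\<Sum>k\<in>K. F k (bvec i)))" .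
  qed
qed

lemma lin_comp:
  assumes f: "lin f" and g: "linv g" shows "lin (\<lambda>x. f (g x))"
proof (rule linI)
  fix x
  have gx: "g x = (\<lambda>n. \<Sum>i\<in>UNIV. x i * g (bvec i) n)"
    using g unfolding linv_def lin_def by (intro ext) blast
  have "f (g x) = (\<Sum>i\<in>UNIV. f (\<lambda>n. x i * g (bvec i) n))"
    unfolding gx by (rule lin_sum[OF f])
  also have "\<dots> = (\<Sum>i\<in>UNIV. x i * f (g (bvec i)))"
    by (simp add: lin_scale[OF f])
  finally show "f (g x) = (\<Sum>i\<in>UNIV. x i * f (g (bvec i)))" .
qed

lemma linvI: "(\<And>n. lin (\<lambda>x. g x n)) \<Longrightarrow> linv g"
  unfolding linv_def by blast
lemma linvD: "linv g \<Longrightarrow> lin (\<lambda>x. g x n)"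
  unfolding linv_def by blast

lemma linv_comp: "linv f \<Longrightarrow> linv g \<Longrightarrow> linv (\<lambda>x. f (g x))"
  unfolding linv_def using lin_comp[unfolded linv_def] by blast

lemma linv_id[simp]: "linv (\<lambda>x. x)" "linv id"
  by (auto simp: linv_def)

lemma linv_expand: "linv g \<Longrightarrow> g x = (\<lambda>n. \<Sum>i\<in>UNIV. x i * g (bvec i) n)"
  unfolding linv_def lin_def by blast

lemma bilI: "(\<And>b. lin (\<lambda>a. F a b)) \<Longrightarrow> (\<And>a. lin (\<lambda>b. F a b)) \<Longrightarrow> bil F"
  unfolding bil_def by auto

lemma bilD1: "bil F \<Longrightarrow> lin (\<lambda>a. F a b)" unfolding bil_def by auto
lemma bilD2: "bil F \<Longrightarrow> lin (\<lambda>b. F a b)" unfolding bil_def by auto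


context fixes H :: "('i::finite, 'k::field) hopf"
begin

lemma lin_mul1[simp]: "lin (\<lambda>x. mul H x y n)"
  by (rule linI[where c="\<lambda>i. \<Sum>j\<in>UNIV. y j * hmult H i j n"])
     (simp add: mul_def sum_distrib_left mult.assoc)

lemma lin_mul2[simp]: "lin (\<lambda>y. mul H x y n)"
proof (rule linI[where c="\<lambda>j. \<Sum>i\<in>UNIV. x i * hmult H i j n"])
  fix y
  have "mul H x y n = (\<Sum>i\<in>UNIV. \<Sum>j\<in>UNIV. y j * (x i * hmult H i j n))"
    unfolding mul_def by (intro sum.cong refl) (simp only: mult_ac)
  also have "\<dots> = (\<Sum>j\<in>UNIV. \<Sum>i\<in>UNIV. y j * (x i * hmult H i j n))" by (rule sum.swap)
  also have "\<dots> = (\<Sum>j\<in>UNIV. y j * (\<Sum>i\<in>UNIV. x i * hmult H i j n))" by (simp only: sum_distrib_left)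
  finally show "mul H x y n = (\<Sum>j\<in>UNIV. y j * (\<Sum>i\<in>UNIV. x i * hmult H i j n))" .
qed

lemma linv_mul1[simp]: "linv (\<lambda>x. mul H x y)" by (rule linvI) simp
lemma linv_mul2[simp]: "linv (\<lambda>y. mul H x y)" by (rule linvI) simp
lemma linv_mul2'[simp]: "linv (mul H x)" by (rule linvI) simp

lemma lin_cou[simp]: "lin (cou H)"
  by (rule linI[where c="hcounit H"]) (simp add: cou_def)

lemma lin_ev[simp]: "lin (ev f)"
  by (rule linI[where c="f"]) (simp add: ev_def mult.commute)

lemma lin_comul[simp]: "lin (\<lambda>x. comul H x p q)"
  by (rule linI[where c="\<lambda>l. hcomult H l p q"]) (simp add: comul_def)

lemma lin_antip[simp]: "lin (\<lambda>x. antip H x n)"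
  by (rule linI[where c="\<lambda>l. hantipode H l n"]) (simp add: antip_def)

lemma linv_antip[simp]: "linv (antip H)" by (rule linvI) simp

lemma comul_bvec: "comul H (bvec l) i j = hcomult H l i j"
  by (simp add: comul_def)

lemma swe_cong: "(\<And>i j. F (bvec i) (bvec j) = G (bvec i) (bvec j)) \<Longrightarrow> swe H x F = swe H x G"
  unfolding swe_def by simp

lemma swe_cmult: "c * swe H x F = swe H x (\<lambda>a b. c * F a b)"
  unfolding swe_def by (simp only: sum_distrib_left mult.left_commute)

lemma swe_multc: "swe H x F * c = swe H x (\<lambda>a b. F a b * c)"
  unfolding swe_def by (simp only: sum_distrib_right mult.assoc)

lemma swe_add: "swe H x F + swe H x G = swe H x (\<lambda>a b. F a b + G a b)"
  unfolding swe_def by (simp only: sum.distrib[symmetric] distrib_left)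

lemma swe_sum: "(\<Sum>k\<in>K. swe H x (F k)) = swe H x (\<lambda>a b. \<Sum>k\<in>K. F k a b)"
proof -
  have "(\<Sum>k\<in>K. swe H x (F k)) = (\<Sum>k\<in>K. \<Sum>i\<in>UNIV. \<Sum>j\<in>UNIV. comul H x i j * F k (bvec i) (bvec j))"
    unfolding swe_def ..
  also have "\<dots> = (\<Sum>i\<in>UNIV. \<Sum>k\<in>K. \<Sum>j\<in>UNIV. comul H x i j * F k (bvec i) (bvec j))"
    by (rule sum.swap)
  also have "\<dots> = (\<Sum>i\<in>UNIV. \<Sum>j\<in>UNIV. \<Sum>k\<in>K. comul H x i j * F k (bvec i) (bvec j))"
    by (intro sum.cong refl, rule sum.swap)
  also have "\<dots> = swe H x (\<lambda>a b. \<Sum>k\<in>K. F k a b)"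
    unfolding swe_def by (simp only: sum_distrib_left)
  finally show ?thesis .
qed

lemma sum_swap4: "(\<Sum>i\<in>A. \<Sum>j\<in>B. \<Sum>k\<in>C. \<Sum>l\<in>D. f i j k l) = (\<Sum>k\<in>C. \<Sum>l\<in>D. \<Sum>i\<in>A. \<Sum>j\<in>B. (f i j k l::'a::comm_monoid_add))"
proof -
  have "(\<Sum>i\<in>A. \<Sum>j\<in>B. \<Sum>k\<in>C. \<Sum>l\<in>D. f i j k l) = (\<Sum>i\<in>A. \<Sum>k\<in>C. \<Sum>l\<in>D. \<Sum>j\<in>B. f i j k l)"
    by (intro sum.cong refl, subst sum.swap, intro sum.cong refl, rule sum.swap)
  also have "\<dots> = (\<Sum>k\<in>C. \<Sum>l\<in>D. \<Sum>i\<in>A. \<Sum>j\<in>B. f i j k l)"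
    by (subst sum.swap, intro sum.cong refl, rule sum.swap)
  finally show ?thesis .
qed

lemma swe_swap: "swe H x (\<lambda>a b. swe H y (\<lambda>c d. G a b c d)) = swe H y (\<lambda>c d. swe H x (\<lambda>a b. G a b c d))"
proof -
  have "swe H x (\<lambda>a b. swe H y (\<lambda>c d. G a b c d)) =
        (\<Sum>i\<in>UNIV. \<Sum>j\<in>UNIV. \<Sum>k\<in>UNIV. \<Sum>l\<in>UNIV. comul H x i j * comul H y k l * G (bvec i) (bvec j) (bvec k) (bvec l))"
    unfolding swe_def by (simp only: sum_distrib_left mult.assoc)
  also have "\<dots> = (\<Sum>k\<in>UNIV. \<Sum>l\<in>UNIV. \<Sum>i\<in>UNIV. \<Sum>j\<in>UNIV. comul H x i j * comul H y k l * G (bvec i) (bvec j) (bvec k) (bvec l))"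
    by (rule sum_swap4)
  also have "\<dots> = swe H y (\<lambda>c d. swe H x (\<lambda>a b. G a b c d))"
    unfolding swe_def by (simp only: sum_distrib_left mult.assoc mult.left_commute)
  finally show ?thesis .
qed

lemma swe_expand: "swe H x F = (\<Sum>l\<in>UNIV. x l * swe H (bvec l) F)"
proof -
  have "swe H x F = (\<Sum>i\<in>UNIV. \<Sum>j\<in>UNIV. \<Sum>l\<in>UNIV. x l * (hcomult H l i j * F (bvec i) (bvec j)))"
    unfolding swe_def comul_def by (simp only: sum_distrib_right mult.assoc)
  also have "\<dots> = (\<Sum>l\<in>UNIV. \<Sum>i\<in>UNIV. \<Sum>j\<in>UNIV. x l * (hcomult H l i j * F (bvec i) (bvec j)))"
    by (subst sum.swap, rule sum.cong[OF refl], rule sum.swap)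
  also have "\<dots> = (\<Sum>l\<in>UNIV. x l * swe H (bvec l) F)"
    unfolding swe_def comul_bvec by (simp only: sum_distrib_left)
  finally show ?thesis .
qed

lemma swe_basis: "swe H (bvec l) F = (\<Sum>i\<in>UNIV. \<Sum>j\<in>UNIV. hcomult H l i j * F (bvec i) (bvec j))"
  unfolding swe_def comul_bvec ..

lemma lin_swe_x[simp]: "lin (\<lambda>x. swe H x F)"
  by (rule linI[where c="\<lambda>l. swe H (bvec l) F"]) (rule swe_expand)

lemma swe_smul: "swe H (smul c x) F = c * swe H x F"
  unfolding smul_def by (rule lin_scale[OF lin_swe_x])

lemma lin_swe_param: assumes "\<And>p q. lin (\<lambda>a. F a p q)" shows "lin (\<lambda>a. swe H x (\<lambda>p q. F a p q))"
  unfolding swe_def by (intro lin_sumf lin_cmult assms)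

lemma swe_pull:
  assumes f: "lin f" shows "f (\<lambda>n. swe H x (\<lambda>a b. G a b n)) = swe H x (\<lambda>a b. f (G a b))"
proof -
  have "f (\<lambda>n. swe H x (\<lambda>a b. G a b n)) = (\<Sum>i\<in>UNIV. f (\<lambda>n. \<Sum>j\<in>UNIV. comul H x i j * G (bvec i) (bvec j) n))"
    unfolding swe_def by (rule lin_sum[OF f])
  also have "\<dots> = (\<Sum>i\<in>UNIV. \<Sum>j\<in>UNIV. f (\<lambda>n. comul H x i j * G (bvec i) (bvec j) n))"
    by (rule sum.cong[OF refl], rule lin_sum[OF f])
  also have "\<dots> = swe H x (\<lambda>a b. f (G a b))"
    unfolding swe_def by (rule sum.cong[OF refl], rule sum.cong[OF refl], rule lin_scale[OF f])
  finally show ?thesis .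
qed

lemma comul_swe: "comul H x p q = swe H x (\<lambda>a b. a p * b q)"
  unfolding swe_def by (simp add: mult.assoc[symmetric])



definition tsum :: "('i::finite \<Rightarrow> 'i \<Rightarrow> 'k::field) \<Rightarrow> (('i \<Rightarrow> 'k) \<Rightarrow> ('i \<Rightarrow> 'k) \<Rightarrow> 'k) \<Rightarrow> 'k" where
  "tsum T F = (\<Sum>i\<in>UNIV. \<Sum>j\<in>UNIV. T i j * F (bvec i) (bvec j))"

lemma swe_tsum: "swe H x F = tsum (comul H x) F"
  unfolding swe_def tsum_def ..

lemma bil_expand:
  assumes "bil F" shows "F u v = (\<Sum>p\<in>UNIV. \<Sum>q\<in>UNIV. u p * v q * F (bvec p) (bvec q))"
proof -
  have e1: "\<And>x b. F x b = (\<Sum>p\<in>UNIV. x p * F (bvec p) b)"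
    using bilD1[OF assms] unfolding lin_def by blast
  have e2: "\<And>a y. F a y = (\<Sum>q\<in>UNIV. y q * F a (bvec q))"
    using bilD2[OF assms] unfolding lin_def by blast
  have "F u v = (\<Sum>p\<in>UNIV. u p * F (bvec p) v)" by (rule e1)
  also have "\<dots> = (\<Sum>p\<in>UNIV. u p * (\<Sum>q\<in>UNIV. v q * F (bvec p) (bvec q)))"
    by (rule sum.cong[OF refl], subst e2, rule refl)
  also have "\<dots> = (\<Sum>p\<in>UNIV. \<Sum>q\<in>UNIV. u p * v q * F (bvec p) (bvec q))"
    by (simp only: sum_distrib_left mult.assoc)
  finally show ?thesis .
qed

lemma mul_bvec: "mul H (bvec i) (bvec j) = (\<lambda>p. hmult H i j p)"
proof
  fix l
  have "mul H (bvec i) (bvec j) l = (\<Sum>ia\<in>UNIV. bvec i ia * (\<Sum>ja\<in>UNIV. bvec j ja * hmult H ia ja l))"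
    unfolding mul_def by (simp only: sum_distrib_left mult.assoc)
  also have "\<dots> = hmult H i j l" by simp
  finally show "mul H (bvec i) (bvec j) l = hmult H i j l" .
qed

lemma tsum_tmap:
  assumes F: "bil F" shows "tsum (tmap f g T) F = tsum T (\<lambda>a b. F (f a) (g b))"
proof -
  have "tsum (tmap f g T) F = (\<Sum>p\<in>UNIV. \<Sum>q\<in>UNIV. \<Sum>i\<in>UNIV. \<Sum>j\<in>UNIV.
          T i j * (f (bvec i) p * g (bvec j) q * F (bvec p) (bvec q)))"
    unfolding tsum_def tmap_def by (simp only: sum_distrib_right mult.assoc)
  also have "\<dots> = (\<Sum>i\<in>UNIV. \<Sum>j\<in>UNIV. \<Sum>p\<in>UNIV. \<Sum>q\<in>UNIV.
          T i j * (f (bvec i) p * g (bvec j) q * F (bvec p) (bvec q)))"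
    by (rule sum_swap4)
  also have "\<dots> = tsum T (\<lambda>a b. F (f a) (g b))"
    unfolding tsum_def by (subst (2) bil_expand[OF F]) (simp only: sum_distrib_left)
  finally show ?thesis .
qed

lemma tsum_tprod:
  assumes F: "bil F"
  shows "tsum (tprod H T U) F = tsum T (\<lambda>a b. tsum U (\<lambda>c d. F (mul H a c) (mul H b d)))"
proof -
  have "tsum (tprod H T U) F = (\<Sum>p\<in>UNIV. \<Sum>q\<in>UNIV. \<Sum>i\<in>UNIV. \<Sum>j\<in>UNIV. \<Sum>i'\<in>UNIV. \<Sum>j'\<in>UNIV.
          T i j * (U i' j' * (hmult H i i' p * hmult H j j' q * F (bvec p) (bvec q))))"
    unfolding tsum_def tprod_def by (simp only: sum_distrib_right mult.assoc)
  also have "\<dots> = (\<Sum>i\<in>UNIV. \<Sum>j\<in>UNIV. \<Sum>p\<in>UNIV. \<Sum>q\<in>UNIV. \<Sum>i'\<in>UNIV. \<Sum>j'\<in>UNIV.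
          T i j * (U i' j' * (hmult H i i' p * hmult H j j' q * F (bvec p) (bvec q))))"
    by (rule sum_swap4)
  also have "\<dots> = (\<Sum>i\<in>UNIV. \<Sum>j\<in>UNIV. \<Sum>i'\<in>UNIV. \<Sum>j'\<in>UNIV. \<Sum>p\<in>UNIV. \<Sum>q\<in>UNIV.
          T i j * (U i' j' * (hmult H i i' p * hmult H j j' q * F (bvec p) (bvec q))))"
    by (rule sum.cong[OF refl], rule sum.cong[OF refl], rule sum_swap4)
  also have "\<dots> = tsum T (\<lambda>a b. tsum U (\<lambda>c d. F (mul H a c) (mul H b d)))"
    unfolding tsum_def mul_bvec by (subst (2) bil_expand[OF F]) (simp only: sum_distrib_left)
  finally show ?thesis .
qed

lemma tmul_tmap: "tmul H (tmap f g T) n = tsum T (\<lambda>a b. mul H (f a) (g b) n)"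
proof -
  have "tmul H (tmap f g T) n = (\<Sum>p\<in>UNIV. \<Sum>q\<in>UNIV. \<Sum>i\<in>UNIV. \<Sum>j\<in>UNIV.
          T i j * (f (bvec i) p * g (bvec j) q * hmult H p q n))"
    unfolding tmul_def tmap_def by (simp only: sum_distrib_right mult.assoc)
  also have "\<dots> = (\<Sum>i\<in>UNIV. \<Sum>j\<in>UNIV. \<Sum>p\<in>UNIV. \<Sum>q\<in>UNIV.
          T i j * (f (bvec i) p * g (bvec j) q * hmult H p q n))"
    by (rule sum_swap4)
  also have "\<dots> = tsum T (\<lambda>a b. mul H (f a) (g b) n)"
    unfolding tsum_def mul_def by (simp only: sum_distrib_left)
  finally show ?thesis .
qed

end


context
  fixes H :: "('i::finite, 'k::field) hopf"
  assumes HA: "hopf_algebra H"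
begin

lemma ax_assoc: "mul H (mul H x y) z = mul H x (mul H y z)"
  using HA unfolding hopf_algebra_def by blast
lemma ax_unit_l[simp]: "mul H (one H) x = x"
  using HA unfolding hopf_algebra_def by blast
lemma ax_unit_r[simp]: "mul H x (one H) = x"
  using HA unfolding hopf_algebra_def by blast
lemma ax_coassoc: "(\<Sum>p\<in>UNIV. hcomult H l p k * hcomult H p i j) = (\<Sum>q\<in>UNIV. hcomult H l i q * hcomult H q j k)"
  using HA unfolding hopf_algebra_def by blast
lemma ax_counit_l: "(\<Sum>i\<in>UNIV. hcounit H i * hcomult H l i j) = (if l = j then 1 else 0)"
  using HA unfolding hopf_algebra_def by blast
lemma ax_counit_r: "(\<Sum>j\<in>UNIV. hcomult H l i j * hcounit H j) = (if l = i then 1 else 0)"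
  using HA unfolding hopf_algebra_def by blast
lemma ax_comul_mul: "comul H (mul H x y) = tprod H (comul H x) (comul H y)"
  using HA unfolding hopf_algebra_def by blast
lemma ax_comul_one: "comul H (one H) = (\<lambda>i j. one H i * one H j)"
  using HA unfolding hopf_algebra_def by blast
lemma ax_cou_mul: "cou H (mul H x y) = cou H x * cou H y"
  using HA unfolding hopf_algebra_def by blast
lemma ax_cou_one[simp]: "cou H (one H) = 1"
  using HA unfolding hopf_algebra_def by blast
lemma ax_antip_l: "tmul H (tmap (antip H) id (comul H x)) = smul (cou H x) (one H)"
  using HA unfolding hopf_algebra_def by blast
lemma ax_antip_r: "tmul H (tmap id (antip H) (comul H x)) = smul (cou H x) (one H)"
  using HA unfolding hopf_algebra_def by blast

lemma swe_antip_l: "swe H x (\<lambda>a b. mul H (antip H a) b n) = cou H x * one H n"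
  using fun_cong[OF ax_antip_l[of x], of n] by (simp add: tmul_tmap swe_tsum smul_def)

lemma swe_antip_r: "swe H x (\<lambda>a b. mul H a (antip H b) n) = cou H x * one H n"
  using fun_cong[OF ax_antip_r[of x], of n] by (simp add: tmul_tmap swe_tsum smul_def)

lemma swe_mul: "bil F \<Longrightarrow> swe H (mul H x y) F = swe H x (\<lambda>a b. swe H y (\<lambda>c d. F (mul H a c) (mul H b d)))"
  by (simp add: swe_tsum ax_comul_mul tsum_tprod)

lemma swe_one: "bil F \<Longrightarrow> swe H (one H) F = F (one H) (one H)"
  by (simp add: swe_tsum ax_comul_one tsum_def bil_expand[of F "one H" "one H"] mult.assoc)

lemma swe_eqI: "(\<And>l. swe H (bvec l) F = swe H (bvec l) G) \<Longrightarrow> swe H x F = swe H x G"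
proof -
  assume e: "\<And>l. swe H (bvec l) F = swe H (bvec l) G"
  have "swe H x F = (\<Sum>l\<in>UNIV. x l * swe H (bvec l) F)" by (rule swe_expand)
  also have "\<dots> = (\<Sum>l\<in>UNIV. x l * swe H (bvec l) G)" by (simp only: e)
  also have "\<dots> = swe H x G" by (rule swe_expand[symmetric])
  finally show ?thesis .
qed

lemma swe_coassoc:
  "swe H x (\<lambda>a b. swe H a (\<lambda>c d. G c d b)) = swe H x (\<lambda>a b. swe H b (\<lambda>c d. G a c d))"
proof (rule swe_eqI)
  fix l
  let ?G = "\<lambda>i j k. G (bvec i) (bvec j) (bvec k)"
  let ?c = "hcomult H"
  have "swe H (bvec l) (\<lambda>a b. swe H a (\<lambda>c d. G c d b)) =
      (\<Sum>p\<in>UNIV. \<Sum>k\<in>UNIV. \<Sum>i\<in>UNIV. \<Sum>j\<in>UNIV. ?c l p k * (?c p i j * ?G i j k))"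
    unfolding swe_basis by (simp only: sum_distrib_left)
  also have "\<dots> = (\<Sum>i\<in>UNIV. \<Sum>j\<in>UNIV. \<Sum>p\<in>UNIV. \<Sum>k\<in>UNIV. ?c l p k * (?c p i j * ?G i j k))"
    by (rule sum_swap4)
  also have "\<dots> = (\<Sum>i\<in>UNIV. \<Sum>j\<in>UNIV. \<Sum>k\<in>UNIV. \<Sum>p\<in>UNIV. ?c l p k * (?c p i j * ?G i j k))"
    by (rule sum.cong[OF refl], rule sum.cong[OF refl], rule sum.swap)
  also have "\<dots> = (\<Sum>i\<in>UNIV. \<Sum>j\<in>UNIV. \<Sum>k\<in>UNIV. (\<Sum>p\<in>UNIV. ?c l p k * ?c p i j) * ?G i j k)"
    by (simp only: sum_distrib_right mult.assoc)
  also have "\<dots> = (\<Sum>i\<in>UNIV. \<Sum>j\<in>UNIV. \<Sum>k\<in>UNIV. (\<Sum>q\<in>UNIV. ?c l i q * ?c q j k) * ?G i j k)"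
    by (simp only: ax_coassoc)
  also have "\<dots> = (\<Sum>i\<in>UNIV. \<Sum>j\<in>UNIV. \<Sum>k\<in>UNIV. \<Sum>q\<in>UNIV. ?c l i q * (?c q j k * ?G i j k))"
    by (simp only: sum_distrib_right mult.assoc)
  also have "\<dots> = (\<Sum>i\<in>UNIV. \<Sum>j\<in>UNIV. \<Sum>q\<in>UNIV. \<Sum>k\<in>UNIV. ?c l i q * (?c q j k * ?G i j k))"
    by (rule sum.cong[OF refl], rule sum.cong[OF refl], rule sum.swap)
  also have "\<dots> = (\<Sum>i\<in>UNIV. \<Sum>q\<in>UNIV. \<Sum>j\<in>UNIV. \<Sum>k\<in>UNIV. ?c l i q * (?c q j k * ?G i j k))"
    by (rule sum.cong[OF refl], rule sum.swap)
  also have "\<dots> = swe H (bvec l) (\<lambda>a b. swe H b (\<lambda>c d. G a c d))"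
    unfolding swe_basis by (simp only: sum_distrib_left)
  finally show "swe H (bvec l) (\<lambda>a b. swe H a (\<lambda>c d. G c d b)) = swe H (bvec l) (\<lambda>a b. swe H b (\<lambda>c d. G a c d))" .
qed

lemma cou_bvec: "cou H (bvec i) = hcounit H i"
  unfolding cou_def by simp

lemma swe_counit_l:
  assumes h: "lin h" shows "swe H x (\<lambda>a b. cou H a * h b) = h x"
proof (rule lin_eqI[OF lin_swe_x h])
  fix l
  have "swe H (bvec l) (\<lambda>a b. cou H a * h b) = (\<Sum>i\<in>UNIV. \<Sum>j\<in>UNIV. hcomult H l i j * (hcounit H i * h (bvec j)))"
    unfolding swe_basis cou_bvec ..
  also have "\<dots> = (\<Sum>j\<in>UNIV. \<Sum>i\<in>UNIV. hcounit H i * hcomult H l i j * h (bvec j))"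
    by (subst sum.swap) (simp only: mult_ac)
  also have "\<dots> = (\<Sum>j\<in>UNIV. (\<Sum>i\<in>UNIV. hcounit H i * hcomult H l i j) * h (bvec j))"
    by (simp only: sum_distrib_right)
  also have "\<dots> = h (bvec l)" by (simp add: ax_counit_l)
  finally show "swe H (bvec l) (\<lambda>a b. cou H a * h b) = h (bvec l)" .
qed

lemma swe_counit_r:
  assumes h: "lin h" shows "swe H x (\<lambda>a b. h a * cou H b) = h x"
proof (rule lin_eqI[OF lin_swe_x h])
  fix l
  have "swe H (bvec l) (\<lambda>a b. h a * cou H b) = (\<Sum>i\<in>UNIV. \<Sum>j\<in>UNIV. hcomult H l i j * hcounit H j * h (bvec i))"
    unfolding swe_basis cou_bvec by (simp only: mult_ac)
  also have "\<dots> = (\<Sum>i\<in>UNIV. (\<Sum>j\<in>UNIV. hcomult H l i j * hcounit H j) * h (bvec i))"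
    by (simp only: sum_distrib_right)
  also have "\<dots> = h (bvec l)" by (simp add: ax_counit_r)
  finally show "swe H (bvec l) (\<lambda>a b. h a * cou H b) = h (bvec l)" .
qed


lemma mul_smul_l: "mul H (smul c x) y = smul c (mul H x y)"
  unfolding smul_def by (rule ext, rule lin_scale[OF lin_mul1])
lemma mul_smul_r: "mul H x (smul c y) = smul c (mul H x y)"
  unfolding smul_def by (rule ext, rule lin_scale[OF lin_mul2])
lemma mul_smul_l': "mul H (\<lambda>n. c * x n) y m = c * mul H x y m"
  by (rule lin_scale[OF lin_mul1])
lemma mul_smul_r': "mul H x (\<lambda>n. c * y n) m = c * mul H x y m"
  by (rule lin_scale[OF lin_mul2])

lemma sw_cons: "sw H (f # fs) x = (\<lambda>n. swe H x (\<lambda>a b. mul H (f a) (sw H fs b) n))"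
  unfolding swe_def by simp

declare sw.simps(2)[simp del]

lemma linv_sw[simp]: "linv (sw H fs)"
proof (cases fs)
  case Nil
  show ?thesis unfolding Nil by (rule linvI) (simp add: smul_def lin_multc)
next
  case (Cons f gs)
  show ?thesis unfolding Cons sw_cons by (rule linvI) simp
qed

lemma lin_sw[simp]: "lin (\<lambda>x. sw H fs x n)"
  by (rule linvD[OF linv_sw])

lemma sw_snoc:
  assumes f: "linv f"
  shows "sw H (fs @ [f]) x = (\<lambda>n. swe H x (\<lambda>a b. mul H (sw H fs a) (f b) n))"
proof (induction fs arbitrary: x)
  case Nil
  show ?case
  proof
    fix n
    have "sw H ([] @ [f]) x n = swe H x (\<lambda>a b. f a n * cou H b)"
      by (simp add: sw_cons smul_def mul_smul_r' mult.commute)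
    also have "\<dots> = f x n" by (rule swe_counit_r[OF linvD[OF f]])
    also have "\<dots> = swe H x (\<lambda>a b. cou H a * f b n)" by (rule swe_counit_l[OF linvD[OF f], symmetric])
    also have "\<dots> = swe H x (\<lambda>a b. mul H (sw H [] a) (f b) n)"
      by (simp add: smul_def mul_smul_l')
    finally show "sw H ([] @ [f]) x n = swe H x (\<lambda>a b. mul H (sw H [] a) (f b) n)" .
  qed
next
  case (Cons g fs)
  show ?case
  proof
    fix n
    have "sw H ((g # fs) @ [f]) x n = swe H x (\<lambda>a b. mul H (g a) (sw H (fs @ [f]) b) n)"
      by (simp add: sw_cons)
    also have "\<dots> = swe H x (\<lambda>a b. swe H b (\<lambda>c d. mul H (g a) (mul H (sw H fs c) (f d)) n))"
      by (simp only: Cons.IH swe_pull[OF lin_mul2])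
    also have "\<dots> = swe H x (\<lambda>a b. swe H a (\<lambda>c d. mul H (g c) (mul H (sw H fs d) (f b)) n))"
      by (rule swe_coassoc[symmetric])
    also have "\<dots> = swe H x (\<lambda>a b. swe H a (\<lambda>c d. mul H (mul H (g c) (sw H fs d)) (f b) n))"
      by (simp only: ax_assoc)
    also have "\<dots> = swe H x (\<lambda>a b. mul H (sw H (g # fs) a) (f b) n)"
      by (simp only: sw_cons swe_pull[OF lin_mul1])
    finally show "sw H ((g # fs) @ [f]) x n = swe H x (\<lambda>a b. mul H (sw H (g # fs) a) (f b) n)" .
  qed
qed

definition alg :: "(('i \<Rightarrow> 'k) \<Rightarrow> ('i \<Rightarrow> 'k)) \<Rightarrow> bool" where
  "alg g \<longleftrightarrow> linv g \<and> (\<forall>x y. g (mul H x y) = mul H (g x) (g y)) \<and> g (one H) = one H"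

lemma linv_smul: "linv g \<Longrightarrow> g (smul c x) = smul c (g x)"
  unfolding smul_def by (rule ext, rule lin_scale[OF linvD])

lemma alg_sw:
  assumes g: "alg g" shows "g (sw H fs x) = sw H (map (\<lambda>f v. g (f v)) fs) x"
proof (induction fs arbitrary: x)
  case Nil
  show ?case using g unfolding alg_def by (simp add: linv_smul)
next
  case (Cons f fs)
  have gl: "linv g" and gm: "\<And>x y. g (mul H x y) = mul H (g x) (g y)" using g unfolding alg_def by auto
  show ?case
  proof
    fix n
    have "g (sw H (f # fs) x) n = swe H x (\<lambda>a b. g (mul H (f a) (sw H fs b)) n)"
      unfolding sw_cons by (rule swe_pull[OF linvD[OF gl]])
    also have "\<dots> = sw H (map (\<lambda>f v. g (f v)) (f # fs)) x n"
      by (simp add: gm Cons.IH sw_cons)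
    finally show "g (sw H (f # fs) x) n = sw H (map (\<lambda>f v. g (f v)) (f # fs)) x n" .
  qed
qed

lemma alg_id: "alg (\<lambda>x. x)" unfolding alg_def by simp
lemma alg_comp: "alg f \<Longrightarrow> alg g \<Longrightarrow> alg (\<lambda>x. f (g x))"
  unfolding alg_def by (auto intro: linv_comp)
lemma alg_funpow: "alg f \<Longrightarrow> alg (f ^^ k)"
proof (induction k)
  case 0 show ?case using alg_id by (simp add: id_def)
next
  case (Suc k) thus ?case using alg_comp[of f "f ^^ k"] by (simp add: comp_def)
qed

lemma antip_unique_l:
  assumes L: "linv L" and inv: "\<And>b n. swe H b (\<lambda>a c. mul H (L a) c n) = cou H b * one H n"
  shows "L b = antip H b"
proof
  fix n
  let ?X = "swe H b (\<lambda>a c. swe H c (\<lambda>d e. mul H (mul H (L a) d) (antip H e) n))"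
  have "?X = swe H b (\<lambda>a c. mul H (L a) (\<lambda>n'. swe H c (\<lambda>d e. mul H d (antip H e) n')) n)"
    by (simp only: ax_assoc swe_pull[OF lin_mul2])
  also have "\<dots> = swe H b (\<lambda>a c. L a n * cou H c)"
    by (simp add: swe_antip_r mul_smul_r' mult.commute)
  also have "\<dots> = L b n" by (rule swe_counit_r[OF linvD[OF L]])
  finally have 1: "?X = L b n" .
  have "?X = swe H b (\<lambda>a c. swe H a (\<lambda>d e. mul H (mul H (L d) e) (antip H c) n))"
    by (rule swe_coassoc[symmetric])
  also have "\<dots> = swe H b (\<lambda>a c. mul H (\<lambda>n'. swe H a (\<lambda>d e. mul H (L d) e n')) (antip H c) n)"
    by (simp only: swe_pull[OF lin_mul1])
  also have "\<dots> = swe H b (\<lambda>a c. cou H a * antip H c n)"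
    by (simp add: inv mul_smul_l')
  also have "\<dots> = antip H b n" by (rule swe_counit_l) simp
  finally show "L b n = antip H b n" using 1 by simp
qed

lemma antip_unique_r:
  assumes R: "linv R" and inv: "\<And>b n. swe H b (\<lambda>a c. mul H a (R c) n) = cou H b * one H n"
  shows "R b = antip H b"
proof
  fix n
  let ?X = "swe H b (\<lambda>a c. swe H c (\<lambda>d e. mul H (mul H (antip H a) d) (R e) n))"
  have "?X = swe H b (\<lambda>a c. mul H (antip H a) (\<lambda>n'. swe H c (\<lambda>d e. mul H d (R e) n')) n)"
    by (simp only: ax_assoc swe_pull[OF lin_mul2])
  also have "\<dots> = swe H b (\<lambda>a c. antip H a n * cou H c)"
    by (simp add: inv mul_smul_r' mult.commute)
  also have "\<dots> = antip H b n" by (rule swe_counit_r) simp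
  finally have 1: "?X = antip H b n" .
  have "?X = swe H b (\<lambda>a c. swe H a (\<lambda>d e. mul H (mul H (antip H d) e) (R c) n))"
    by (rule swe_coassoc[symmetric])
  also have "\<dots> = swe H b (\<lambda>a c. mul H (\<lambda>n'. swe H a (\<lambda>d e. mul H (antip H d) e n')) (R c) n)"
    by (simp only: swe_pull[OF lin_mul1])
  also have "\<dots> = swe H b (\<lambda>a c. cou H a * R c n)"
    by (simp add: swe_antip_l mul_smul_l')
  also have "\<dots> = R b n" by (rule swe_counit_l[OF linvD[OF R]])
  finally show "R b n = antip H b n" using 1 by simp
qed


lemma bil_mulS: "bil (\<lambda>a b. mul H (antip H a) b n)"
  by (rule bilI) (simp_all add: lin_comp[OF lin_mul1 linv_antip])

lemma antip_one: "antip H (one H) = one H"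
proof
  fix n
  have "swe H (one H) (\<lambda>a b. mul H (antip H a) b n) = cou H (one H) * one H n" by (rule swe_antip_l)
  thus "antip H (one H) n = one H n" by (simp add: swe_one[OF bil_mulS])
qed

lemma cou_antip: "cou H (antip H x) = cou H x"
proof -
  have "cou H (\<lambda>n. swe H x (\<lambda>a b. mul H (antip H a) b n)) = cou H (\<lambda>n. cou H x * one H n)"
    by (simp only: swe_antip_l)
  also have "\<dots> = cou H x" by (simp add: lin_scale[OF lin_cou])
  finally have 1: "cou H (\<lambda>n. swe H x (\<lambda>a b. mul H (antip H a) b n)) = cou H x" .
  have "cou H (\<lambda>n. swe H x (\<lambda>a b. mul H (antip H a) b n)) = swe H x (\<lambda>a b. cou H (antip H a) * cou H b)"
    by (simp add: swe_pull[OF lin_cou] ax_cou_mul)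
  also have "\<dots> = cou H (antip H x)"
    by (rule swe_counit_r[OF lin_comp[OF lin_cou linv_antip]])
  finally show ?thesis using 1 by simp
qed

lemma linv_from_add:
  assumes add: "\<And>a x y. t (\<lambda>j. a * x j + y j) = (\<lambda>j. a * t x j + t y j)"
  shows "linv (t :: ('i \<Rightarrow> 'k) \<Rightarrow> ('i \<Rightarrow> 'k))"
proof -
  have z: "t (\<lambda>j. 0) = (\<lambda>j. 0)"
  proof
    fix j
    have "t (\<lambda>j. 1 * 0 + 0) = (\<lambda>j. 1 * t (\<lambda>j. 0) j + t (\<lambda>j. 0) j)" by (rule add)
    hence "t (\<lambda>j. 0) = (\<lambda>j. t (\<lambda>j. 0) j + t (\<lambda>j. 0) j)" by (simp only: mult_1 add_0_right)
    hence "t (\<lambda>j. 0) j = t (\<lambda>j. 0) j + t (\<lambda>j. 0) j" by (rule fun_cong)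
    thus "t (\<lambda>j. 0) j = 0" by (metis add_cancel_right_right)
  qed
  have ind: "finite F \<Longrightarrow> t (\<lambda>j. \<Sum>i\<in>F. x i * bvec i j) = (\<lambda>j. \<Sum>i\<in>F. x i * t (bvec i) j)" for F x
  proof (induction F rule: finite_induct)
    case empty thus ?case using z by simp
  next
    case (insert i F)
    have "t (\<lambda>j. \<Sum>i\<in>insert i F. x i * bvec i j) = t (\<lambda>j. x i * bvec i j + (\<Sum>i\<in>F. x i * bvec i j))"
      using insert by simp
    also have "\<dots> = (\<lambda>j. x i * t (bvec i) j + t (\<lambda>j. \<Sum>i\<in>F. x i * bvec i j) j)" by (rule add)
    also have "\<dots> = (\<lambda>j. \<Sum>i\<in>insert i F. x i * t (bvec i) j)" using insert by simp
    finally show ?case .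
  qed
  show ?thesis
  proof (rule linvI, rule linI)
    fix n and x :: "'i \<Rightarrow> 'k"
    have "x = (\<lambda>j. \<Sum>i\<in>UNIV. x i * bvec i j)" by (rule ext, rule sum_bvec_r2[symmetric])
    hence "t x = t (\<lambda>j. \<Sum>i\<in>UNIV. x i * bvec i j)" by simp
    also have "\<dots> = (\<lambda>j. \<Sum>i\<in>UNIV. x i * t (bvec i) j)" by (rule ind) simp
    finally show "t x n = (\<Sum>i\<in>UNIV. x i * t (bvec i) n)" by simp
  qed
qed

context
  fixes t assumes HT: "hopf_automorphism H t"
begin

lemma t_add: "t (\<lambda>j. a * x j + y j) = (\<lambda>j. a * t x j + t y j)"
  using HT unfolding hopf_automorphism_def by blast
lemma t_linv[simp]: "linv t" by (rule linv_from_add[OF t_add])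
lemma t_lin[simp]: "lin (\<lambda>x. t x n)" by (rule linvD[OF t_linv])
lemma t_bij: "bij t" using HT unfolding hopf_automorphism_def by blast
lemma t_mul: "t (mul H x y) = mul H (t x) (t y)" using HT unfolding hopf_automorphism_def by blast
lemma t_one: "t (one H) = one H" using HT unfolding hopf_automorphism_def by blast
lemma t_comul: "comul H (t x) = tmap t t (comul H x)" using HT unfolding hopf_automorphism_def by blast
lemma t_cou: "cou H (t x) = cou H x" using HT unfolding hopf_automorphism_def by blast
lemma t_alg: "alg t" unfolding alg_def using t_linv t_mul t_one by blast

lemma swe_t: "bil F \<Longrightarrow> swe H (t x) F = swe H x (\<lambda>a b. F (t a) (t b))"
  by (simp add: swe_tsum t_comul tsum_tmap)

lemma t_antip: "t (antip H b) = antip H (t b)"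
proof
  fix n
  have eq: "t (antip H a) n * cou H c = swe H c (\<lambda>d e. mul H (t (mul H (antip H a) d)) (antip H (t e)) n)" for a c
  proof -
    have "t (antip H a) n * cou H c = mul H (t (antip H a)) (\<lambda>n'. cou H (t c) * one H n') n"
      by (simp add: mul_smul_r' t_cou mult.commute)
    also have "\<dots> = mul H (t (antip H a)) (\<lambda>n'. swe H (t c) (\<lambda>d e. mul H d (antip H e) n')) n"
      by (simp only: swe_antip_r)
    also have "\<dots> = swe H (t c) (\<lambda>d e. mul H (t (antip H a)) (mul H d (antip H e)) n)"
      by (rule swe_pull[OF lin_mul2])
    also have "\<dots> = swe H c (\<lambda>d e. mul H (t (antip H a)) (mul H (t d) (antip H (t e))) n)"
      by (rule swe_t) (rule bilI, rule lin_comp[OF lin_mul2 linv_mul1], rule lin_comp[OF lin_mul2 linv_comp[OF linv_mul2' linv_antip]])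
    also have "\<dots> = swe H c (\<lambda>d e. mul H (t (mul H (antip H a) d)) (antip H (t e)) n)"
      by (simp only: t_mul ax_assoc)
    finally show ?thesis .
  qed
  have "t (antip H b) n = swe H b (\<lambda>a c. t (antip H a) n * cou H c)"
    by (rule swe_counit_r[OF lin_comp[OF t_lin linv_antip], symmetric])
  also have "\<dots> = swe H b (\<lambda>a c. swe H c (\<lambda>d e. mul H (t (mul H (antip H a) d)) (antip H (t e)) n))"
    by (simp only: eq)
  also have "\<dots> = swe H b (\<lambda>a c. swe H a (\<lambda>d e. mul H (t (mul H (antip H d) e)) (antip H (t c)) n))"
    by (rule swe_coassoc[symmetric])
  also have "\<dots> = swe H b (\<lambda>a c. mul H (t (\<lambda>n'. swe H a (\<lambda>d e. mul H (antip H d) e n'))) (antip H (t c)) n)"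
    by (simp only: swe_pull[OF lin_comp[OF lin_mul1 t_linv]])
  also have "\<dots> = swe H b (\<lambda>a c. cou H a * antip H (t c) n)"
    by (simp add: swe_antip_l linv_smul[OF t_linv, unfolded smul_def] t_one mul_smul_l')
  also have "\<dots> = antip H (t b) n"
    by (rule swe_counit_l[OF lin_comp[OF lin_antip t_linv]])
  finally show "t (antip H b) n = antip H (t b) n" .
qed

end


lemma ev_bvec[simp]: "ev f (bvec (i::'i)) = (f i::'k)"
  unfolding ev_def by simp

lemma bvec_sym: "bvec (j::'i) n = (bvec n j :: 'k)"
  unfolding bvec_def by auto

context
  fixes Lr lr
  assumes RI: "right_integral H Lr" and DRI: "dual_right_integral H lr" and N: "ev lr Lr = 1"
begin

lemma RI': "mul H Lr x = smul (cou H x) Lr" using RI unfolding right_integral_def by blast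

lemma lr_right: "swe H x (\<lambda>r s. ev lr r * s n) = ev lr x * one H n"
proof (rule lin_eqI[OF lin_swe_x lin_multc[OF lin_ev]])
  fix l
  have d: "conv H lr (bvec n) l = smul (ev (bvec n) (one H)) lr l"
    using DRI unfolding dual_right_integral_def by simp
  have "swe H (bvec l) (\<lambda>r s. ev lr r * s n) = (\<Sum>i\<in>UNIV. \<Sum>j\<in>UNIV. hcomult H l i j * lr i * bvec n j)"
    unfolding swe_basis by (simp add: bvec_sym mult.assoc)
  also have "\<dots> = conv H lr (bvec n) l" unfolding conv_def ..
  also have "\<dots> = ev lr (bvec l) * one H n" using d by (simp add: smul_def ev_def mult.commute)
  finally show "swe H (bvec l) (\<lambda>r s. ev lr r * s n) = ev lr (bvec l) * one H n" .
qed

definition TT where "TT b = (\<lambda>n. swe H Lr (\<lambda>p q. ev lr (mul H p b) * q n))"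

lemma TT_linv: "linv TT"
  unfolding TT_def by (rule linvI, rule lin_swe_param, rule lin_multc, rule lin_comp[OF lin_ev linv_mul2'])

lemma bil_evs: "bil (\<lambda>r s. ev lr r * s n)"
  by (rule bilI) (simp_all add: lin_multc lin_cmult)

lemma TT_inv: "swe H b (\<lambda>a c. mul H (TT a) c n) = cou H b * one H n"
proof -
  have "swe H b (\<lambda>a c. mul H (TT a) c n) = swe H b (\<lambda>a c. swe H Lr (\<lambda>p q. ev lr (mul H p a) * mul H q c n))"
    unfolding TT_def by (simp only: swe_pull[OF lin_mul1] mul_smul_l')
  also have "\<dots> = swe H Lr (\<lambda>p q. swe H b (\<lambda>a c. ev lr (mul H p a) * mul H q c n))"
    by (rule swe_swap)
  also have "\<dots> = swe H (mul H Lr b) (\<lambda>r s. ev lr r * s n)"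
    by (rule swe_mul[OF bil_evs, symmetric])
  also have "\<dots> = cou H b * one H n"
    by (simp add: RI' swe_smul lr_right N)
  finally show ?thesis .
qed

lemma antip_TT: "antip H b = TT b"
  by (rule antip_unique_l[OF TT_linv TT_inv, symmetric])


lemma mul_smul_one: "mul H q (\<lambda>n. c * one H n) = (\<lambda>m. c * q m)"
  by (rule ext) (simp add: mul_smul_r')

lemma K2:
  assumes G: "bil G"
  shows "swe H Lr (\<lambda>p q. G (mul H p a) q) = swe H Lr (\<lambda>p q. G p (mul H q (antip H a)))"
proof -
  have lh: "lin (\<lambda>a2. swe H Lr (\<lambda>p q. G p (mul H q (antip H a2))))"
    by (rule lin_swe_param, rule lin_comp[OF bilD2[OF G] linv_comp[OF linv_mul2' linv_antip]])
  have bF: "bil (\<lambda>p q. G p (mul H q (antip H a2)))" for a2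
    by (rule bilI, rule bilD1[OF G], rule lin_comp[OF bilD2[OF G] linv_mul1])
  have "swe H Lr (\<lambda>p q. G p (mul H q (antip H a))) =
      swe H a (\<lambda>a1 a2. cou H a1 * swe H Lr (\<lambda>p q. G p (mul H q (antip H a2))))"
    by (rule swe_counit_l[OF lh, symmetric])
  also have "\<dots> = swe H a (\<lambda>a1 a2. swe H (mul H Lr a1) (\<lambda>p q. G p (mul H q (antip H a2))))"
    by (simp only: RI' swe_smul)
  also have "\<dots> = swe H a (\<lambda>a1 a2. swe H Lr (\<lambda>p q. swe H a1 (\<lambda>r t. G (mul H p r) (mul H (mul H q t) (antip H a2)))))"
    by (simp only: swe_mul[OF bF])
  also have "\<dots> = swe H Lr (\<lambda>p q. swe H a (\<lambda>a1 a2. swe H a1 (\<lambda>r t. G (mul H p r) (mul H (mul H q t) (antip H a2)))))"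
    by (rule swe_swap)
  also have "\<dots> = swe H Lr (\<lambda>p q. swe H a (\<lambda>a1 a2. swe H a2 (\<lambda>t u. G (mul H p a1) (mul H (mul H q t) (antip H u)))))"
    by (simp only: swe_coassoc)
  also have "\<dots> = swe H Lr (\<lambda>p q. swe H a (\<lambda>a1 a2. G (mul H p a1) (mul H q (\<lambda>n. swe H a2 (\<lambda>t u. mul H t (antip H u) n)))))"
    by (simp only: ax_assoc swe_pull[OF lin_comp[OF bilD2[OF G] linv_mul2']])
  also have "\<dots> = swe H Lr (\<lambda>p q. swe H a (\<lambda>a1 a2. cou H a2 * G (mul H p a1) q))"
    by (simp only: swe_antip_r mul_smul_one lin_scale[OF bilD2[OF G]])
  also have "\<dots> = swe H Lr (\<lambda>p q. swe H a (\<lambda>a1 a2. G (mul H p a1) q * cou H a2))"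
    by (simp only: mult.commute)
  also have "\<dots> = swe H Lr (\<lambda>p q. G (mul H p a) q)"
  proof -
    have e: "swe H a (\<lambda>a1 a2. G (mul H p a1) q * cou H a2) = G (mul H p a) q" for p q
      by (rule swe_counit_r[where h="\<lambda>v. G (mul H p v) q", OF lin_comp[OF bilD1[OF G] linv_mul2']])
    show ?thesis by (simp only: e)
  qed
  finally show ?thesis by (rule sym)
qed

lemma antip_mul: "antip H (mul H x y) = mul H (antip H y) (antip H x)"
proof
  fix n
  have bG: "bil (\<lambda>r s. ev lr (mul H r y) * s n)"
    by (rule bilI, rule lin_multc[OF lin_comp[OF lin_ev linv_mul1]], rule lin_cmult[OF lin_coord])
  have "antip H (mul H x y) n = swe H Lr (\<lambda>p q. ev lr (mul H (mul H p x) y) * q n)"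
    by (simp only: antip_TT TT_def ax_assoc)
  also have "\<dots> = swe H Lr (\<lambda>p q. ev lr (mul H p y) * mul H q (antip H x) n)"
    by (rule K2[OF bG])
  also have "\<dots> = mul H (antip H y) (antip H x) n"
    by (simp only: antip_TT TT_def swe_pull[OF lin_mul1] mul_smul_l')
  finally show "antip H (mul H x y) n = mul H (antip H y) (antip H x) n" .
qed

lemma dualK2: "swe H x (\<lambda>a b. ev lr (mul H a y) * b n) = swe H y (\<lambda>a b. ev lr (mul H x a) * antip H b n)"
proof -
  have bF: "bil (\<lambda>r s. ev lr r * mul H s (antip H b) n)" for b
    by (rule bilI, rule lin_multc[OF lin_ev], rule lin_cmult[OF lin_mul1])
  have "swe H y (\<lambda>a b. ev lr (mul H x a) * antip H b n) =
        swe H y (\<lambda>a b. mul H (\<lambda>n'. ev lr (mul H x a) * one H n') (antip H b) n)"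
    by (simp only: mul_smul_l' ax_unit_l)
  also have "\<dots> = swe H y (\<lambda>a b. mul H (\<lambda>n'. swe H (mul H x a) (\<lambda>r s. ev lr r * s n')) (antip H b) n)"
    by (simp only: lr_right)
  also have "\<dots> = swe H y (\<lambda>a b. swe H (mul H x a) (\<lambda>r s. ev lr r * mul H s (antip H b) n))"
    by (simp only: swe_pull[OF lin_mul1] mul_smul_l')
  also have "\<dots> = swe H y (\<lambda>a b. swe H x (\<lambda>r s. swe H a (\<lambda>r' s'. ev lr (mul H r r') * mul H (mul H s s') (antip H b) n)))"
    by (simp only: swe_mul[OF bF])
  also have "\<dots> = swe H x (\<lambda>r s. swe H y (\<lambda>a b. swe H a (\<lambda>r' s'. ev lr (mul H r r') * mul H (mul H s s') (antip H b) n)))"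
    by (rule swe_swap)
  also have "\<dots> = swe H x (\<lambda>r s. swe H y (\<lambda>a b. swe H b (\<lambda>s' b'. ev lr (mul H r a) * mul H (mul H s s') (antip H b') n)))"
    by (simp only: swe_coassoc)
  also have "\<dots> = swe H x (\<lambda>r s. swe H y (\<lambda>a b. ev lr (mul H r a) * mul H s (\<lambda>n'. swe H b (\<lambda>s' b'. mul H s' (antip H b') n')) n))"
    by (simp only: ax_assoc swe_pull[OF lin_cmult[OF lin_mul2]])
  also have "\<dots> = swe H x (\<lambda>r s. swe H y (\<lambda>a b. (ev lr (mul H r a) * s n) * cou H b))"
    by (simp only: swe_antip_r mul_smul_one mult_ac)
  also have "\<dots> = swe H x (\<lambda>r s. ev lr (mul H r y) * s n)"
    by (simp only: swe_counit_r[OF lin_multc[OF lin_comp[OF lin_ev linv_mul2']]])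
  finally show ?thesis by (rule sym)
qed

lemma antip_comul: "comul H (antip H b) p q = swe H b (\<lambda>a c. antip H c p * antip H a q)"
proof -
  have "comul H (antip H b) p q = swe H Lr (\<lambda>r t. ev lr (mul H r b) * comul H t p q)"
    by (simp only: antip_TT TT_def swe_pull[OF lin_comul] lin_scale[OF lin_comul])
  also have "\<dots> = swe H Lr (\<lambda>r t. swe H t (\<lambda>u w. ev lr (mul H r b) * (u p * w q)))"
    by (simp only: comul_swe swe_cmult)
  also have "\<dots> = swe H Lr (\<lambda>r t. swe H r (\<lambda>r1 r2. ev lr (mul H r1 b) * (r2 p * t q)))"
    by (rule swe_coassoc[symmetric])
  also have "\<dots> = swe H Lr (\<lambda>r t. swe H r (\<lambda>r1 r2. ev lr (mul H r1 b) * r2 p) * t q)"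
    by (simp only: swe_multc mult.assoc)
  also have "\<dots> = swe H Lr (\<lambda>r t. swe H b (\<lambda>a c. ev lr (mul H r a) * antip H c p) * t q)"
    by (simp only: dualK2)
  also have "\<dots> = swe H Lr (\<lambda>r t. swe H b (\<lambda>a c. ev lr (mul H r a) * antip H c p * t q))"
    by (simp only: swe_multc)
  also have "\<dots> = swe H Lr (\<lambda>r t. swe H b (\<lambda>a c. antip H c p * (ev lr (mul H r a) * t q)))"
    by (simp only: mult_ac)
  also have "\<dots> = swe H b (\<lambda>a c. swe H Lr (\<lambda>r t. antip H c p * (ev lr (mul H r a) * t q)))"
    by (rule swe_swap)
  also have "\<dots> = swe H b (\<lambda>a c. antip H c p * antip H a q)"
    by (simp only: swe_cmult antip_TT TT_def)
  finally show ?thesis .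
qed

lemma swe_antip:
  assumes F: "bil F" shows "swe H (antip H x) F = swe H x (\<lambda>a b. F (antip H b) (antip H a))"
proof -
  have "swe H (antip H x) F = (\<Sum>p\<in>UNIV. \<Sum>q\<in>UNIV. swe H x (\<lambda>a c. antip H c p * antip H a q) * F (bvec p) (bvec q))"
    unfolding swe_def[of H "antip H x"] antip_comul ..
  also have "\<dots> = swe H x (\<lambda>a c. \<Sum>p\<in>UNIV. \<Sum>q\<in>UNIV. antip H c p * antip H a q * F (bvec p) (bvec q))"
    by (simp only: swe_multc swe_sum)
  also have "\<dots> = swe H x (\<lambda>a b. F (antip H b) (antip H a))"
    by (simp only: bil_expand[OF F, symmetric])
  finally show ?thesis .
qed


lemma antip_sw:
  assumes "\<And>f. f \<in> set fs \<Longrightarrow> linv f \<and> (\<forall>x. f (antip H x) = antip H (f x))"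
  shows "antip H (sw H fs x) = sw H (rev fs) (antip H x)"
  using assms
proof (induction fs arbitrary: x)
  case Nil
  show ?case by (simp add: linv_smul[OF linv_antip] antip_one cou_antip)
next
  case (Cons f fs)
  have fl: "linv f" and fc: "\<And>x. f (antip H x) = antip H (f x)" using Cons.prems by auto
  have IH: "\<And>x. antip H (sw H fs x) = sw H (rev fs) (antip H x)" using Cons by auto
  have bF: "bil (\<lambda>a b. mul H (sw H (rev fs) a) (f b) n)" for n
    by (rule bilI, rule lin_comp[OF lin_mul1 linv_sw], rule lin_comp[OF lin_mul2 fl])
  show ?case
  proof
    fix n
    have "antip H (sw H (f # fs) x) n = swe H x (\<lambda>a b. antip H (mul H (f a) (sw H fs b)) n)"
      unfolding sw_cons by (rule swe_pull[OF lin_antip])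
    also have "\<dots> = swe H x (\<lambda>a b. mul H (sw H (rev fs) (antip H b)) (f (antip H a)) n)"
      by (simp only: antip_mul IH fc)
    also have "\<dots> = swe H (antip H x) (\<lambda>a b. mul H (sw H (rev fs) a) (f b) n)"
      by (rule swe_antip[OF bF, symmetric])
    also have "\<dots> = sw H (rev (f # fs)) (antip H x) n"
      by (simp add: sw_snoc[OF fl])
    finally show "antip H (sw H (f # fs) x) n = sw H (rev (f # fs)) (antip H x) n" .
  qed
qed

lemma trace_i: "(\<Sum>i\<in>UNIV. sw H gs (antip H (bvec i)) i) = ev lr (sw H (id # gs) Lr)"
proof -
  have e: "\<And>p v. ev lr (mul H p v) = (\<Sum>i\<in>UNIV. v i * ev lr (mul H p (bvec i)))"
    using lin_comp[OF lin_ev linv_mul2'] unfolding lin_def by blast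
  have "(\<Sum>i\<in>UNIV. sw H gs (antip H (bvec i)) i) = (\<Sum>i\<in>UNIV. swe H Lr (\<lambda>p q. ev lr (mul H p (bvec i)) * sw H gs q i))"
    by (simp only: antip_TT TT_def swe_pull[OF lin_sw] lin_scale[OF lin_sw])
  also have "\<dots> = swe H Lr (\<lambda>p q. \<Sum>i\<in>UNIV. ev lr (mul H p (bvec i)) * sw H gs q i)"
    by (rule swe_sum)
  also have "\<dots> = swe H Lr (\<lambda>p q. ev lr (mul H p (sw H gs q)))"
  proof -
    have e': "(\<Sum>i\<in>UNIV. ev lr (mul H p (bvec i)) * sw H gs q i) = ev lr (mul H p (sw H gs q))" for p q
      by (subst e[of p "sw H gs q"], rule sum.cong[OF refl], rule mult.commute)
    show ?thesis by (simp only: e')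
  qed
  also have "\<dots> = ev lr (sw H (id # gs) Lr)"
    unfolding sw_cons id_apply by (rule swe_pull[OF lin_ev, symmetric])
  finally show ?thesis .
qed

end

context
  fixes Ll ll
  assumes LI: "left_integral H Ll" and DLI: "dual_left_integral H ll" and NL: "ev ll Ll = 1"
begin

lemma LI': "mul H x Ll = smul (cou H x) Ll" using LI unfolding left_integral_def by blast

lemma ll_left: "swe H x (\<lambda>r s. ev ll s * r n) = ev ll x * one H n"
proof (rule lin_eqI[OF lin_swe_x lin_multc[OF lin_ev]])
  fix l
  have d: "conv H (bvec n) ll l = smul (ev (bvec n) (one H)) ll l"
    using DLI unfolding dual_left_integral_def by simp
  have "swe H (bvec l) (\<lambda>r s. ev ll s * r n) = (\<Sum>i\<in>UNIV. \<Sum>j\<in>UNIV. hcomult H l i j * bvec n i * ll j)"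
    unfolding swe_basis by (rule sum.cong[OF refl], rule sum.cong[OF refl]) (simp add: bvec_sym mult_ac)
  also have "\<dots> = conv H (bvec n) ll l" unfolding conv_def ..
  also have "\<dots> = ev ll (bvec l) * one H n" using d by (simp add: smul_def ev_def mult.commute)
  finally show "swe H (bvec l) (\<lambda>r s. ev ll s * r n) = ev ll (bvec l) * one H n" .
qed

definition TL where "TL b = (\<lambda>n. swe H Ll (\<lambda>p q. ev ll (mul H b q) * p n))"

lemma TL_linv: "linv TL"
  unfolding TL_def by (rule linvI, rule lin_swe_param, rule lin_multc, rule lin_comp[OF lin_ev linv_mul1])

lemma bil_evl: "bil (\<lambda>r s. ev ll s * r n)"
  by (rule bilI) (simp_all add: lin_multc lin_cmult)

lemma TL_inv: "swe H b (\<lambda>a c. mul H a (TL c) n) = cou H b * one H n"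
proof -
  have "swe H b (\<lambda>a c. mul H a (TL c) n) = swe H b (\<lambda>a c. swe H Ll (\<lambda>p q. ev ll (mul H c q) * mul H a p n))"
    unfolding TL_def by (simp only: swe_pull[OF lin_mul2] mul_smul_r')
  also have "\<dots> = swe H (mul H b Ll) (\<lambda>r s. ev ll s * r n)"
    by (rule swe_mul[OF bil_evl, symmetric])
  also have "\<dots> = cou H b * one H n"
    by (simp add: LI' swe_smul ll_left NL)
  finally show ?thesis .
qed

lemma antip_TL: "antip H b = TL b"
  by (rule antip_unique_r[OF TL_linv TL_inv, symmetric])

lemma trace_ii: "(\<Sum>i\<in>UNIV. antip H (sw H fs (bvec i)) i) = ev ll (sw H (fs @ [id]) Ll)"
proof -
  have e: "\<And>q v. ev ll (mul H (sw H fs v) q) = (\<Sum>i\<in>UNIV. v i * ev ll (mul H (sw H fs (bvec i)) q))"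
    using lin_comp[OF lin_ev linv_comp[OF linv_mul1 linv_sw]] unfolding lin_def by blast
  have "(\<Sum>i\<in>UNIV. antip H (sw H fs (bvec i)) i) = (\<Sum>i\<in>UNIV. swe H Ll (\<lambda>p q. ev ll (mul H (sw H fs (bvec i)) q) * p i))"
    by (simp only: antip_TL TL_def)
  also have "\<dots> = swe H Ll (\<lambda>p q. \<Sum>i\<in>UNIV. ev ll (mul H (sw H fs (bvec i)) q) * p i)"
    by (rule swe_sum)
  also have "\<dots> = swe H Ll (\<lambda>p q. ev ll (mul H (sw H fs p) q))"
  proof -
    have e': "(\<Sum>i\<in>UNIV. ev ll (mul H (sw H fs (bvec i)) q) * p i) = ev ll (mul H (sw H fs p) q)" for p q
      unfolding e[of p q] by (rule sum.cong[OF refl], rule mult.commute)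
    show ?thesis by (simp only: e')
  qed
  also have "\<dots> = ev ll (sw H (fs @ [id]) Ll)"
    unfolding sw_snoc[OF linv_id(2)] id_apply by (rule swe_pull[OF lin_ev, symmetric])
  finally show ?thesis .
qed

end

context
  fixes t assumes HT: "hopf_automorphism H t"
begin

lemma tpow_alg: "alg (t ^^ j)" by (rule alg_funpow[OF t_alg[OF HT]])
lemma tpow_linv: "linv (t ^^ j)" using tpow_alg unfolding alg_def by blast
lemma tpow_antip: "(t ^^ j) (antip H x) = antip H ((t ^^ j) x)"
proof (induction j arbitrary: x)
  case 0 show ?case by simp
next
  case (Suc j) thus ?case by (simp add: t_antip[OF HT])
qed

end

end

lemma list_i: "map (\<lambda>k. f ^^ k) [0..<Suc n] = id # rev (map (\<lambda>k. f ^^ (Suc n - 1 - k)) [0..<Suc n - 1])"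
proof (rule nth_equalityI)
  show "length (map (\<lambda>k. f ^^ k) [0..<Suc n]) = length (id # rev (map (\<lambda>k. f ^^ (Suc n - 1 - k)) [0..<Suc n - 1]))"
    by simp
next
  fix i assume "i < length (map (\<lambda>k. f ^^ k) [0..<Suc n])"
  hence i: "i < Suc n" by simp
  show "map (\<lambda>k. f ^^ k) [0..<Suc n] ! i = (id # rev (map (\<lambda>k. f ^^ (Suc n - 1 - k)) [0..<Suc n - 1])) ! i"
  proof (cases i)
    case 0 thus ?thesis by (simp del: upt_Suc)
  next
    case (Suc j)
    with i have j: "j < n" by simp
    have "n - (n - Suc j) = Suc j" using j by simp
    thus ?thesis using Suc j i by (simp del: upt_Suc funpow.simps add: rev_nth)
  qed
qed

lemma list_ii: "map (\<lambda>k. f ^^ (Suc n - 1 - k)) [0..<Suc n] = map (\<lambda>k. f ^^ (Suc n - 1 - k)) [0..<Suc n - 1] @ [id]"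
  by simp

lemma pow_arith: "k \<le> n \<Longrightarrow> n + n * k = (n - k) + Suc n * (k::nat)"
proof -
  assume "k \<le> n" then obtain d where "n = k + d" using le_Suc_ex by blast
  thus ?thesis by (simp add: algebra_simps)
qed

theorem corollary5p2:
  fixes H :: "('i::finite, 'k::field) hopf"
    and tau :: "('i \<Rightarrow> 'k) \<Rightarrow> ('i \<Rightarrow> 'k)"
    and m :: nat
  assumes "hopf_algebra H"
    and "hopf_automorphism H tau"
    and "m \<ge> 1"
    and "tau ^^ m = id"
  shows "(\<forall>Lr lr. right_integral H Lr \<longrightarrow> dual_right_integral H lr \<longrightarrow> ev lr Lr = 1 \<longrightarrow>
            fs_ind H m tau = ev lr (twpow H m tau Lr))
       \<and> (\<forall>Ll ll. left_integral H Ll \<longrightarrow> dual_left_integral H ll \<longrightarrow> ev ll Ll = 1 \<longrightarrow>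
            fs_ind H m tau = ev ll (inv tau (twpow H m (inv tau) Ll)))"
proof -
  note HA = assms(1) and HT = assms(2)
  obtain n where mn: "m = Suc n" using assms(3) by (cases m) auto
  define Pl where "Pl = map (\<lambda>k. tau ^^ (m - 1 - k)) [0..<m - 1]"
  have fsi: "fs_ind H m tau = (\<Sum>i\<in>UNIV. antip H (sw H Pl (bvec i)) i)"
    unfolding fs_ind_def Pmap_def Pl_def ..
  have part1: "fs_ind H m tau = ev lr (twpow H m tau Lr)"
    if RI: "right_integral H Lr" and DRI: "dual_right_integral H lr" and N: "ev lr Lr = 1" for Lr lr
  proof -
    have hyp: "linv f \<and> (\<forall>x. f (antip H x) = antip H (f x))" if "f \<in> set Pl" for f
      using that unfolding Pl_def using tpow_linv[OF HA HT] tpow_antip[OF HA HT] by auto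
    have "fs_ind H m tau = (\<Sum>i\<in>UNIV. sw H (rev Pl) (antip H (bvec i)) i)"
      unfolding fsi by (simp only: antip_sw[OF HA RI DRI N hyp])
    also have "\<dots> = ev lr (sw H (id # rev Pl) Lr)"
      by (rule trace_i[OF HA RI DRI N])
    also have "id # rev Pl = map (\<lambda>k. tau ^^ k) [0..<m]"
      unfolding Pl_def mn by (rule list_i[symmetric])
    finally show ?thesis unfolding twpow_def .
  qed
  have part2: "fs_ind H m tau = ev ll (inv tau (twpow H m (inv tau) Ll))"
    if LI: "left_integral H Ll" and DLI: "dual_left_integral H ll" and NL: "ev ll Ll = 1" for Ll ll
  proof -
    have c1: "tau \<circ> tau ^^ n = id" using assms(4) unfolding mn by simp
    have c2: "tau ^^ n \<circ> tau = id" using assms(4) unfolding mn funpow_Suc_right .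
    have iv: "inv tau = tau ^^ n" by (rule inv_unique_comp[OF c1 c2])
    have pw: "(\<lambda>v. (tau ^^ n) ((tau ^^ (n * k)) v)) = tau ^^ (Suc n - 1 - k)" if "k \<le> n" for k
    proof -
      have "(\<lambda>v. (tau ^^ n) ((tau ^^ (n * k)) v)) = tau ^^ (n + n * k)" by (simp add: funpow_add comp_def)
      also have "\<dots> = tau ^^ ((n - k) + Suc n * k)" using that by (simp only: pow_arith)
      also have "\<dots> = tau ^^ (n - k) \<circ> (tau ^^ Suc n) ^^ k" by (simp only: funpow_add funpow_mult)
      also have "\<dots> = tau ^^ (Suc n - 1 - k)" using assms(4) unfolding mn by simp
      finally show ?thesis .
    qed
    have "inv tau (twpow H m (inv tau) Ll) = (tau ^^ n) (sw H (map (\<lambda>k. tau ^^ (n * k)) [0..<m]) Ll)"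
      unfolding twpow_def iv funpow_mult ..
    also have "\<dots> = sw H (map (\<lambda>f v. (tau ^^ n) (f v)) (map (\<lambda>k. tau ^^ (n * k)) [0..<m])) Ll"
      by (rule alg_sw[OF HA tpow_alg[OF HA HT]])
    also have "map (\<lambda>f v. (tau ^^ n) (f v)) (map (\<lambda>k. tau ^^ (n * k)) [0..<m]) = map (\<lambda>k. tau ^^ (m - 1 - k)) [0..<m]"
      unfolding mn by (auto intro!: map_cong simp: pw)
    also have "\<dots> = Pl @ [id]" unfolding Pl_def mn by (rule list_ii)
    finally have "inv tau (twpow H m (inv tau) Ll) = sw H (Pl @ [id]) Ll" .
    thus ?thesis unfolding fsi by (simp only: trace_ii[OF HA LI DLI NL])
  qed
  show ?thesis using part1 part2 by blast
qed

end
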